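(* Let $k$ be an odd integer with $k\ge 5$, let $D$ be a strong $k$-quasi-transitive digraph with $\mathrm{diam}(D)\ge k+2$, let $u,v\in V(D)$ with $d(u,v)=k+2$, and let $P$ be a shortest $(u,v)$-path. If $D[V(P)]$ is a semicomplete digraph, then $D[V(D)\setminus V(P)]$ is a semicomplete digraph.
   Context: All digraphs are finite, without loops or multiple arcs (opposite arcs allowed). Vertices $x,y$ are adjacent if $xy$ or $yx$ is an arc. For $k\ge 2$, $D$ is $k$-quasi-transitive if for every path $x_0x_1\ldots x_k$ of length $k$, $x_0$ and $x_k$ are adjacent. $d(x,y)$ is the length of a shortest $(x,y)$-path, $\mathrm{diam}(D)=\max_{x,y}d(x,y)$. $D[S]$ is the induced subdigraph; a semicomplete digraph is one in which every two distinct vertices are adjacent. *)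

theory Defs
  imports Main
begin

definition digraph :: "'a set \<Rightarrow> ('a \<times> 'a) set \<Rightarrow> bool" where
  "digraph V A \<longleftrightarrow> finite V \<and> A \<subseteq> V \<times> V \<and> (\<forall>x. (x, x) \<notin> A)"

definition adjacent :: "('a \<times> 'a) set \<Rightarrow> 'a \<Rightarrow> 'a \<Rightarrow> bool" where
  "adjacent A x y \<longleftrightarrow> (x, y) \<in> A \<or> (y, x) \<in> A"

definition is_path :: "'a set \<Rightarrow> ('a \<times> 'a) set \<Rightarrow> 'a list \<Rightarrow> bool" where
  "is_path V A p \<longleftrightarrow> p \<noteq> [] \<and> set p \<subseteq> V \<and> distinct p \<and>
     (\<forall>i. Suc i < length p \<longrightarrow> (p ! i, p ! Suc i) \<in> A)"

definition is_path_from_to :: "'a set \<Rightarrow> ('a \<times> 'a) set \<Rightarrow> 'a list \<Rightarrow> 'a \<Rightarrow> 'a \<Rightarrow> bool" where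
  "is_path_from_to V A p x y \<longleftrightarrow> is_path V A p \<and> hd p = x \<and> last p = y"

definition path_len :: "'a list \<Rightarrow> nat" where
  "path_len p = length p - 1"

text \<open>Distance d(x,y): length of a shortest (x,y)-path (used only when such a path exists).\<close>

definition dist :: "'a set \<Rightarrow> ('a \<times> 'a) set \<Rightarrow> 'a \<Rightarrow> 'a \<Rightarrow> nat" where
  "dist V A x y = (LEAST n. \<exists>p. is_path_from_to V A p x y \<and> path_len p = n)"

definition strong :: "'a set \<Rightarrow> ('a \<times> 'a) set \<Rightarrow> bool" where
  "strong V A \<longleftrightarrow> (\<forall>x\<in>V. \<forall>y\<in>V. \<exists>p. is_path_from_to V A p x y)"

definition diam :: "'a set \<Rightarrow> ('a \<times> 'a) set \<Rightarrow> nat" where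
  "diam V A = Max {dist V A x y | x y. x \<in> V \<and> y \<in> V}"

definition k_quasi_transitive :: "nat \<Rightarrow> 'a set \<Rightarrow> ('a \<times> 'a) set \<Rightarrow> bool" where
  "k_quasi_transitive k V A \<longleftrightarrow>
     (\<forall>p. is_path V A p \<and> path_len p = k \<longrightarrow> adjacent A (hd p) (last p))"

definition induced_arcs :: "('a \<times> 'a) set \<Rightarrow> 'a set \<Rightarrow> ('a \<times> 'a) set" where
  "induced_arcs A S = A \<inter> (S \<times> S)"

definition semicomplete :: "'a set \<Rightarrow> ('a \<times> 'a) set \<Rightarrow> bool" where
  "semicomplete V A \<longleftrightarrow> (\<forall>x\<in>V. \<forall>y\<in>V. x \<noteq> y \<longrightarrow> adjacent A x y)"

end

theory Submission
  imports Defs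
begin

lemma is_path_single: "y \<in> V \<Longrightarrow> is_path V A [y]"
  by (simp add: is_path_def)

lemma is_path_append:
  assumes p: "is_path V A p" and q: "is_path V A q"
    and dj: "set p \<inter> set q = {}" and ar: "(last p, hd q) \<in> A"
  shows "is_path V A (p @ q)"
proof -
  have pne: "p \<noteq> []" and qne: "q \<noteq> []" using p q by (auto simp: is_path_def)
  have pa: "\<And>i. Suc i < length p \<Longrightarrow> (p ! i, p ! Suc i) \<in> A" using p by (auto simp: is_path_def)
  have qa: "\<And>i. Suc i < length q \<Longrightarrow> (q ! i, q ! Suc i) \<in> A" using q by (auto simp: is_path_def)
  have arcs: "((p @ q) ! i, (p @ q) ! Suc i) \<in> A" if "Suc i < length (p @ q)" for i
  proof (cases "Suc i < length p")
    case True then show ?thesis using pa[OF True] by (simp add: nth_append)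
  next
    case False
    show ?thesis
    proof (cases "Suc i = length p")
      case True
      have ii: "i = length p - 1" using True by simp
      then have "(p @ q) ! i = last p" using pne by (simp add: nth_append last_conv_nth)
      moreover have "(p @ q) ! Suc i = hd q" using True qne by (simp add: nth_append hd_conv_nth)
      ultimately show ?thesis using ar by simp
    next
      case False2: False
      then have ge: "length p \<le> i" using False by simp
      then have "Suc (i - length p) < length q" using that by simp
      from qa[OF this] show ?thesis using ge by (simp add: nth_append Suc_diff_le)
    qed
  qed
  show ?thesis using p q dj arcs by (auto simp: is_path_def)
qed

lemma is_path_sub:
  assumes p: "is_path V A p" and ab: "a \<le> b" and bl: "b < length p"
  shows "is_path V A (drop a (take (Suc b) p))"
    and "hd (drop a (take (Suc b) p)) = p ! a"
    and "last (drop a (take (Suc b) p)) = p ! b"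
    and "length (drop a (take (Suc b) p)) = Suc b - a"
    and "set (drop a (take (Suc b) p)) \<subseteq> set p"
    and "\<And>t. t < Suc b - a \<Longrightarrow> (drop a (take (Suc b) p)) ! t = p ! (a + t)"
proof -
  let ?s = "drop a (take (Suc b) p)"
  have len: "length ?s = Suc b - a" using ab bl by simp
  have nth: "\<And>t. t < Suc b - a \<Longrightarrow> ?s ! t = p ! (a + t)" using ab bl by simp
  show "length ?s = Suc b - a" by (rule len)
  show "\<And>t. t < Suc b - a \<Longrightarrow> ?s ! t = p ! (a + t)" by (rule nth)
  show "set ?s \<subseteq> set p" by (meson in_set_dropD in_set_takeD subsetI)
  have ne: "?s \<noteq> []" using len ab by auto
  show "hd ?s = p ! a" using ne nth[of 0] len by (simp add: hd_conv_nth)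
  show "last ?s = p ! b" using ne nth[of "b - a"] len ab by (simp add: last_conv_nth)
  have d: "distinct ?s" using p by (simp add: is_path_def distinct_drop distinct_take)
  have arcs: "(?s ! i, ?s ! Suc i) \<in> A" if "Suc i < length ?s" for i
  proof -
    have "Suc (a + i) < length p" using that len bl ab by simp
    then have "(p ! (a + i), p ! Suc (a + i)) \<in> A" using p by (simp add: is_path_def)
    then show ?thesis using that len nth[of i] nth[of "Suc i"] by simp
  qed
  show "is_path V A ?s" using ne d arcs \<open>set ?s \<subseteq> set p\<close> p by (auto simp: is_path_def)
qed


lemma path_pre: "y \<in> V \<Longrightarrow> y \<notin> set q \<Longrightarrow> is_path V A q \<Longrightarrow> (y, hd q) \<in> A \<Longrightarrow> is_path V A (y # q)"
  using is_path_append[of V A "[y]" q] is_path_single[of y V A] by auto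

lemma path_post: "y \<in> V \<Longrightarrow> y \<notin> set q \<Longrightarrow> is_path V A q \<Longrightarrow> (last q, y) \<in> A \<Longrightarrow> is_path V A (q @ [y])"
  using is_path_append[of V A q "[y]"] is_path_single[of y V A] by auto

lemma path_ne: "is_path V A q \<Longrightarrow> q \<noteq> []" by (simp add: is_path_def)

lemma path_take: "is_path V A p \<Longrightarrow> 0 < n \<Longrightarrow> n \<le> length p \<Longrightarrow> is_path V A (take n p)"
  using is_path_sub(1)[of V A p 0 "n - 1"] by simp

lemma path_drop: "is_path V A p \<Longrightarrow> n < length p \<Longrightarrow> is_path V A (drop n p)"
  using is_path_sub(1)[of V A p n "length p - 1"] by simp

lemma path_distinct: "is_path V A p \<Longrightarrow> distinct p" by (simp add: is_path_def)
lemma path_arc: "is_path V A p \<Longrightarrow> Suc i < length p \<Longrightarrow> (p ! i, p ! Suc i) \<in> A" by (simp add: is_path_def)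
lemma path_V: "is_path V A p \<Longrightarrow> set p \<subseteq> V" by (simp add: is_path_def)

lemma adjacent_sym: "adjacent A a b = adjacent A b a"
  by (auto simp: adjacent_def)

locale pcore =
  fixes K a m mu b :: nat and Iw Ow Iz Oz :: "nat set"
  assumes a: "a \<in> Ow" and aN: "a \<le> K + 7" and m: "m \<in> Iz" and mN: "m \<le> K + 7"
    and mu: "mu \<in> Iw" and muN: "mu \<le> K + 7" and b: "b \<in> Oz" and bN: "b \<le> K + 7"
    and RW1: "\<And>c. c \<in> Ow \<Longrightarrow> c \<le> a"
    and RW2: "\<And>c. c \<in> Iw \<Longrightarrow> mu \<le> c"
    and RZ1: "\<And>c. c \<in> Iz \<Longrightarrow> m \<le> c"
    and RZ2: "\<And>c. c \<in> Oz \<Longrightarrow> c \<le> b"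
    and SA: "\<And>c. c < a \<Longrightarrow> c \<in> Iw \<or> c \<in> Ow"
    and SMU: "\<And>c. mu < c \<Longrightarrow> c \<le> K + 7 \<Longrightarrow> c \<in> Iw \<or> c \<in> Ow"
    and SM: "\<And>c. m < c \<Longrightarrow> c \<le> K + 7 \<Longrightarrow> c \<in> Iz \<or> c \<in> Oz"
    and SB: "\<And>c. c < b \<Longrightarrow> c \<in> Iz \<or> c \<in> Oz"
    and F1w: "\<And>t. K + (4 + t) \<in> Iw \<Longrightarrow> t \<in> Iw \<or> t \<in> Ow"
    and F1z: "\<And>t. K + (4 + t) \<in> Iz \<Longrightarrow> t \<in> Iz \<or> t \<in> Oz"
    and F2w: "\<And>t. t \<in> Ow \<Longrightarrow> t \<le> 3 \<Longrightarrow> K + (4 + t) \<in> Iw \<or> K + (4 + t) \<in> Ow"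
    and F2z: "\<And>t. t \<in> Oz \<Longrightarrow> t \<le> 3 \<Longrightarrow> K + (4 + t) \<in> Iz \<or> K + (4 + t) \<in> Oz"
    and R5w: "a \<le> mu + 2" and R5z: "b \<le> m + 2"
    and X1a: "a \<le> m" and X1b: "b \<le> mu"
    and X2a: "\<And>t. t \<in> Ow \<Longrightarrow> K + (3 + t) \<in> Iz \<Longrightarrow> False"
    and X2b: "\<And>t. t \<in> Oz \<Longrightarrow> K + (3 + t) \<in> Iw \<Longrightarrow> False"
begin

lemma swp: "pcore K b mu m a Iz Oz Iw Ow"
  by unfold_locales (fact a aN m mN mu muN b bN RW1 RW2 RZ1 RZ2 SA SMU SM SB F1w F1z F2w F2z R5w R5z X1a X1b X2a X2b)+

lemma lowW: "c < a \<Longrightarrow> c < mu \<Longrightarrow> c \<in> Ow"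
  using SA[of c] RW2[of c] by auto
lemma highW: "a < c \<Longrightarrow> mu < c \<Longrightarrow> c \<le> K + 7 \<Longrightarrow> c \<in> Iw"
  using SMU[of c] RW1[of c] by auto
lemma lowZ: "c < b \<Longrightarrow> c < m \<Longrightarrow> c \<in> Oz"
  using SB[of c] RZ1[of c] by auto
lemma highZ: "b < c \<Longrightarrow> m < c \<Longrightarrow> c \<le> K + 7 \<Longrightarrow> c \<in> Iz"
  using SM[of c] RZ2[of c] by auto

lemma s1: "a \<le> 6"
proof (rule ccontr)
  assume "\<not> a \<le> 6"
  then have a7: "7 \<le> a" by simp
  have mu5: "5 \<le> mu" using R5w a7 by linarith
  have low: "t \<le> 4 \<Longrightarrow> t \<in> Ow" for t using lowW[of t] a7 mu5 by linarith
  show False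
  proof (cases "K + 3 \<le> m")
    case True
    have "m - (K + 3) \<in> Ow" using low mN by simp
    moreover have "K + (3 + (m - (K + 3))) \<in> Iz" using True m by simp
    ultimately show False by (rule X2a)
  next
    case False
    have "K + 7 \<in> Iz" using highZ[of "K + 7"] False R5z by linarith
    moreover have "4 \<in> Ow" using low by simp
    ultimately show False using X2a[of 4] by simp
  qed
qed

lemma s2: "K + 1 \<le> m"
proof (rule ccontr)
  assume "\<not> K + 1 \<le> m"
  then have mK: "m \<le> K" by simp
  have hi: "K + 3 \<le> c \<Longrightarrow> c \<le> K + 7 \<Longrightarrow> c \<in> Iz" for c using highZ[of c] mK R5z by linarith
  show False
  proof (cases "a \<le> 4")
    case True
    then show False using X2a[of a] a hi[of "K + (3 + a)"] by simp
  next
    case False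
    then have "0 \<in> Ow" using lowW[of 0] R5w by linarith
    then show False using X2a[of 0] hi[of "K + 3"] by simp
  qed
qed

lemma s3: "0 \<in> Ow" "K + 7 \<in> Iz"
proof -
  show "0 \<in> Ow"
  proof (cases "a = 0")
    case True then show ?thesis using a by simp
  next
    case False then show ?thesis using lowW[of 0] s2 X1b pcore.s2[OF swp] by linarith
  qed
  show "K + 7 \<in> Iz"
  proof (cases "m = K + 7")
    case True then show ?thesis using m by simp
  next
    case False then show ?thesis using highZ[of "K + 7"] mN pcore.s1[OF swp] by linarith
  qed
qed

lemma s4a: "2 \<le> a"
proof (rule ccontr)
  assume "\<not> 2 \<le> a"
  then have a1: "a \<le> 1" by simp
  have I7: "K + 7 \<in> Iw" and O0: "0 \<in> Oz" using pcore.s3[OF swp] by auto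
  have "3 \<in> Iw \<or> 3 \<in> Ow" using F1w[of 3] I7 by simp
  moreover have "3 \<notin> Ow" using RW1[of 3] a1 by auto
  ultimately have "3 \<in> Iw" by simp
  then have mu3: "mu \<le> 3" using RW2 by auto
  have "K + 3 \<in> Iw"
  proof (cases "mu = K + 3")
    case True then show ?thesis using mu by simp
  next
    case False then show ?thesis using highW[of "K + 3"] a1 mu3 by linarith
  qed
  then show False using X2b[of 0] O0 by simp
qed

lemma s4b: "m \<le> K + 5"
proof (rule ccontr)
  assume "\<not> m \<le> K + 5"
  then have m6: "K + 6 \<le> m" by simp
  have I7: "K + 7 \<in> Iw" and O0: "0 \<in> Oz" using pcore.s3[OF swp] by auto
  have "K + 4 \<in> Iz \<or> K + 4 \<in> Oz" using F2z[of 0] O0 by simp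
  moreover have "K + 4 \<notin> Iz" using RZ1[of "K + 4"] m6 by auto
  ultimately have "K + 4 \<in> Oz" by simp
  then have b4: "K + 4 \<le> b" using RZ2 by auto
  have "4 \<in> Oz"
  proof (cases "b = 4")
    case True then show ?thesis using b by simp
  next
    case False then show ?thesis using lowZ[of 4] b4 m6 by linarith
  qed
  then show False using X2b[of 4] I7 by simp
qed

lemma s5a: "2 \<in> Ow"
proof -
  have I7: "K + 7 \<in> Iw" and O0: "0 \<in> Oz" using pcore.s3[OF swp] by auto
  have b2: "2 \<le> b" using pcore.s4a[OF swp] .
  show ?thesis
  proof (cases "a = 2")
    case True then show ?thesis using a by simp
  next
    case False
    then have a3: "3 \<le> a" using s4a by simp
    show ?thesis
    proof (cases "2 < mu")
      case True then show ?thesis using lowW[of 2] a3 by simp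
    next
      case False
      then have mu2: "mu \<le> 2" by simp
      show ?thesis
      proof (cases "a < K + 3")
        case True
        then have "K + 3 \<in> Iw" using highW[of "K + 3"] mu2 by linarith
        then show ?thesis using X2b[of 0] O0 by simp
      next
        case False
        then have aK: "K + 3 \<le> a" by simp
        have a4: "a \<le> 4" using R5w mu2 by simp
        show ?thesis
        proof (cases "a = 4")
          case True
          then show ?thesis using X2a[of 4] a s3 by simp
        next
          case False
          then have a3': "a = 3" "K = 0" using a3 a4 aK by auto
          have "b = 2" using b2 X1b mu2 by simp
          then have "2 \<in> Oz" using b by simp
          moreover have "K + 5 \<in> Iw" using highW[of "K + 5"] a3' mu2 by simp
          ultimately show ?thesis using X2b[of 2] by simp
        qed
      qed
    qed
  qed
qed

lemma s5b: "K + 5 \<in> Iz"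
proof -
  have I7: "K + 7 \<in> Iw" and O0: "0 \<in> Oz" using pcore.s3[OF swp] by auto
  have mu5: "mu \<le> K + 5" using pcore.s4b[OF swp] .
  show ?thesis
  proof (cases "m = K + 5")
    case True then show ?thesis using m by simp
  next
    case False
    then have m4: "m \<le> K + 4" using s4b by simp
    show ?thesis
    proof (cases "b < K + 5")
      case True then show ?thesis using highZ[of "K + 5"] m4 by linarith
    next
      case False
      then have b5: "K + 5 \<le> b" by simp
      then have m3: "K + 3 \<le> m" using R5z by simp
      show ?thesis
      proof (cases "4 < m")
        case True
        then have "4 \<in> Oz" using lowZ[of 4] b5 by linarith
        then show ?thesis using X2b[of 4] I7 by simp
      next
        case False
        show ?thesis
        proof (cases "m = K + 3")
          case True then show ?thesis using X2a[of 0] s3 m by simp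
        next
          case False2: False
          then have mm: "m = 4" "K = 0" using False m3 m4 by auto
          have "2 \<in> Oz" using lowZ[of 2] b5 mm by simp
          moreover have "mu = 5" using X1b b5 mu5 mm by simp
          then have "K + 5 \<in> Iw" using mu mm by simp
          ultimately show ?thesis using X2b[of 2] by simp
        qed
      qed
    qed
  qed
qed

theorem contra: False
  using X2a[of 2] s5a s5b by simp

end

locale setting =
  fixes V :: "'a set" and A :: "('a \<times> 'a) set" and k :: nat and P :: "'a list"
  assumes dg: "digraph V A" and kqt: "k_quasi_transitive k V A" and str: "strong V A"
    and k5: "5 \<le> k" and Ppath: "is_path V A P" and Plen: "length P = k + 3"
    and Pmin: "\<And>q. is_path V A q \<Longrightarrow> hd q = hd P \<Longrightarrow> last q = last P \<Longrightarrow> k + 3 \<le> length q"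
    and semi: "\<And>a b. a \<in> set P \<Longrightarrow> b \<in> set P \<Longrightarrow> a \<noteq> b \<Longrightarrow> adjacent A a b"
begin

abbreviation N where "N \<equiv> k + 2"

definition x :: "nat \<Rightarrow> 'a" where "x i = P ! i"

definition seg :: "nat \<Rightarrow> nat \<Rightarrow> 'a list" where "seg s e = map x [s..<Suc e]"

lemma Pne: "P \<noteq> []" using Plen by auto

lemma x_in_P: "i \<le> N \<Longrightarrow> x i \<in> set P"
  using Plen by (simp add: x_def)

lemma x_in_V: "i \<le> N \<Longrightarrow> x i \<in> V"
  using x_in_P Ppath by (auto simp: is_path_def)

lemma setP: "set P = x ` {..N}"
proof -
  have "{..<length P} = {..N}" using Plen by auto
  then show ?thesis by (metis atLeast0AtMost atLeast_upt list.set_map map_nth x_def[abs_def])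
qed

lemma x_inj: "i \<le> N \<Longrightarrow> j \<le> N \<Longrightarrow> (x i = x j) = (i = j)"
  using Ppath Plen by (auto simp: x_def is_path_def nth_eq_iff_index_eq)

lemma hdP: "hd P = x 0" using Pne by (simp add: x_def hd_conv_nth)
lemma lastP: "last P = x N" using Pne Plen by (simp add: x_def last_conv_nth)

lemma fwd: "i < N \<Longrightarrow> (x i, x (Suc i)) \<in> A"
  using Ppath Plen by (auto simp: x_def is_path_def)

lemma kqt_adj: "is_path V A p \<Longrightarrow> length p = Suc k \<Longrightarrow> adjacent A (hd p) (last p)"
  using kqt by (auto simp: k_quasi_transitive_def path_len_def)

lemma arcV: "(a, b) \<in> A \<Longrightarrow> a \<in> V \<and> b \<in> V"
  using dg by (auto simp: digraph_def)

lemma seg_len[simp]: "length (seg s e) = Suc e - s" by (simp add: seg_def del: upt_Suc)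
lemma seg_nth: "t < Suc e - s \<Longrightarrow> seg s e ! t = x (s + t)" by (simp add: seg_def del: upt_Suc)
lemma seg_set: "set (seg s e) = x ` {s..e}"
  by (auto simp: seg_def)
lemma seg_ne: "s \<le> e \<Longrightarrow> seg s e \<noteq> []" by (simp add: seg_def)
lemma seg_hd[simp]: "s \<le> e \<Longrightarrow> hd (seg s e) = x s"
  by (simp add: seg_def upt_conv_Cons del: upt_Suc)
lemma seg_last[simp]: "s \<le> e \<Longrightarrow> last (seg s e) = x e"
  by (simp add: seg_def last_map)
lemma seg_setP: "e \<le> N \<Longrightarrow> set (seg s e) \<subseteq> set P"
  using x_in_P by (auto simp: seg_set)

lemma seg_path: assumes "s \<le> e" "e \<le> N" shows "is_path V A (seg s e)"
proof -
  have d: "distinct (seg s e)"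
    unfolding seg_def using assms by (auto simp: distinct_map inj_on_def x_inj)
  have a: "(seg s e ! i, seg s e ! Suc i) \<in> A" if "Suc i < length (seg s e)" for i
    using that assms fwd[of "s + i"] by (simp add: seg_nth)
  show ?thesis using d a assms x_in_V seg_ne by (auto simp: is_path_def seg_set)
qed

lemma seg_disj: "e2 < s1 \<Longrightarrow> e1 \<le> N \<Longrightarrow> set (seg s1 e1) \<inter> set (seg s2 e2) = {}"
  by (auto simp: seg_set x_inj)
lemma seg_disj2: "e1 < s2 \<Longrightarrow> e2 \<le> N \<Longrightarrow> set (seg s1 e1) \<inter> set (seg s2 e2) = {}"
  by (auto simp: seg_set x_inj)
lemma notin_seg: "y \<notin> set P \<Longrightarrow> e \<le> N \<Longrightarrow> y \<notin> set (seg s e)"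
  using seg_setP by auto

lemma no_chord: assumes "i + 2 \<le> j" "j \<le> N" shows "(x i, x j) \<notin> A"
proof
  assume ar: "(x i, x j) \<in> A"
  let ?q = "seg 0 i @ seg j N"
  have "is_path V A ?q"
    by (rule is_path_append) (use assms ar seg_path seg_disj2[of i j N 0] in auto)
  moreover have "hd ?q = hd P" "last ?q = last P" using assms by (auto simp: hdP lastP seg_ne)
  ultimately have "k + 3 \<le> length ?q" by (rule Pmin)
  then show False using assms by simp
qed

lemma back_arc: assumes "i + 2 \<le> j" "j \<le> N" shows "(x j, x i) \<in> A"
proof -
  have "adjacent A (x j) (x i)" using semi[of "x j" "x i"] assms x_in_P x_inj by auto
  then show ?thesis using no_chord[OF assms] by (auto simp: adjacent_def)
qed

lemma short_out:
  assumes y: "y \<in> V" "y \<notin> set P" and ij: "i \<le> N" "j \<le> N"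
    and a1: "(x i, y) \<in> A" and a2: "(y, x j) \<in> A"
  shows "j \<le> i + 2"
proof (rule ccontr)
  assume "\<not> j \<le> i + 2"
  then have ij2: "i + 3 \<le> j" by simp
  let ?q = "seg 0 i @ ([y] @ seg j N)"
  have p2: "is_path V A ([y] @ seg j N)"
    by (rule is_path_append) (use y ij a2 seg_path is_path_single notin_seg in auto)
  have "is_path V A ?q"
    by (rule is_path_append) (use ij ij2 a1 y seg_path p2 notin_seg seg_disj2[of i j N 0] in auto)
  moreover have "hd ?q = hd P" "last ?q = last P" using ij by (auto simp: hdP lastP seg_ne)
  ultimately have "k + 3 \<le> length ?q" by (rule Pmin)
  then show False using ij ij2 by simp
qed


lemma segcat:
  assumes se: "s \<le> e" "e \<le> N" and q: "is_path V A q" and qs: "set q \<subseteq> x ` {..<s}"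
    and hq: "hd q = x t" and te: "t + 2 \<le> e"
  shows "is_path V A (seg s e @ q)"
proof (rule is_path_append)
  show "is_path V A (seg s e)" using seg_path se by auto
  show "is_path V A q" by fact
  show "set (seg s e) \<inter> set q = {}"
  proof -
    have "set (seg s e) \<inter> x ` {..<s} = {}" using se by (auto simp: seg_set x_inj)
    then show ?thesis using qs by auto
  qed
  show "(last (seg s e), hd q) \<in> A" using se hq te back_arc by auto
qed

lemma backpath:
  assumes ic: "i < c" "c \<le> N" and L: "3 \<le> L" "L + 3 \<le> N"
  shows "\<exists>q. is_path V A q \<and> set q \<subseteq> set P \<and> hd q = x c \<and> last q = x i \<and> length q = Suc L"
proof -
  consider (c1) "L \<le> i + 1" | (c2) "i + 2 \<le> L" "c + L \<le> N + 1 + i"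
    | (c3) "i + 3 \<le> L" "N + 2 + i \<le> c + L" | (c4) "i + 2 = L" "N + 2 + i \<le> c + L"
    by linarith
  then show ?thesis
  proof cases
    case c1
    let ?q = "seg c c @ seg (i + 1 - L) i"
    have "is_path V A ?q"
      by (rule segcat[where t="i + 1 - L"]) (use ic L c1 seg_path in \<open>auto simp: seg_set\<close>)
    moreover have "set ?q \<subseteq> set P" using ic seg_setP by auto
    ultimately show ?thesis using ic L c1 by (intro exI[of _ ?q]) (auto simp: seg_ne)
  next
    case c2
    let ?q = "seg c (L + c - 1 - i) @ seg 0 i"
    have "is_path V A ?q"
      by (rule segcat[where t=0]) (use ic L c2 seg_path in \<open>auto simp: seg_set\<close>)
    moreover have "set ?q \<subseteq> set P" using ic c2 seg_setP by auto
    ultimately show ?thesis using ic L c2 by (intro exI[of _ ?q]) (auto simp: seg_ne)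
  next
    case c3
    define g where "g = N + 1 + i - L"
    have g: "i + 1 \<le> g" "g \<le> c - 1" "g + 2 \<le> N" using c3 L ic by (auto simp: g_def)
    let ?r = "seg g (c - 1) @ seg 0 i"
    have r: "is_path V A ?r"
      by (rule segcat[where t=0]) (use ic L c3 g seg_path in \<open>auto simp: seg_set\<close>)
    have rs: "set ?r \<subseteq> x ` {..<c}" using g ic by (auto simp: seg_set)
    let ?q = "seg c N @ ?r"
    have "is_path V A ?q"
      by (rule segcat[where t=g]) (use ic g r rs seg_ne in auto)
    moreover have "set ?q \<subseteq> set P" using ic g seg_setP by auto
    moreover have "length ?q = Suc L" using g ic c3 L by (simp add: g_def)
    ultimately show ?thesis using ic g seg_ne by (intro exI[of _ ?q]) auto
  next
    case c4
    have cN: "c = N" using c4 ic by linarith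
    let ?r = "seg (N - 2) (N - 1) @ seg 1 i"
    have r: "is_path V A ?r"
      by (rule segcat[where t=1]) (use ic L c4 seg_path in \<open>auto simp: seg_set\<close>)
    have rs: "set ?r \<subseteq> x ` {..<N}" using ic L c4 by (auto simp: seg_set)
    let ?q = "seg N N @ ?r"
    have "is_path V A ?q"
      by (rule segcat[where t="N - 2"]) (use r rs seg_ne in auto)
    moreover have "set ?q \<subseteq> set P" using ic seg_setP by auto
    moreover have "length ?q = Suc L" using ic c4 L by simp
    ultimately show ?thesis using ic L c4 cN seg_ne by (intro exI[of _ ?q]) auto
  qed
qed

lemma cw_end:
  assumes "i \<le> N" "L \<le> N"
  shows "\<exists>q. is_path V A q \<and> set q \<subseteq> set P \<and> last q = x i \<and> length q = Suc L"
proof (cases "L \<le> i")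
  case True
  then show ?thesis using assms seg_path seg_setP
    by (intro exI[of _ "seg (i - L) i"]) auto
next
  case False
  let ?q = "seg (i + N + 1 - L) N @ seg 0 i"
  have "is_path V A ?q"
    by (rule segcat[where t=0]) (use assms False seg_path in \<open>auto simp: seg_set\<close>)
  then show ?thesis using assms False seg_setP by (intro exI[of _ ?q]) (auto simp: seg_ne)
qed

lemma cw_start:
  assumes "j \<le> N" "L \<le> N"
  shows "\<exists>q. is_path V A q \<and> set q \<subseteq> set P \<and> hd q = x j \<and> length q = Suc L"
proof (cases "j + L \<le> N")
  case True
  then show ?thesis using assms seg_path seg_setP
    by (intro exI[of _ "seg j (j + L)"]) auto
next
  case False
  let ?q = "seg j N @ seg 0 (j + L - N - 1)"
  have "is_path V A ?q"
    by (rule segcat[where t=0]) (use assms False seg_path in \<open>auto simp: seg_set\<close>)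
  then show ?thesis using assms False seg_setP by (intro exI[of _ ?q]) (auto simp: seg_ne)
qed



definition In :: "'a \<Rightarrow> nat set" where "In y = {i. i \<le> N \<and> (x i, y) \<in> A}"
definition Out :: "'a \<Rightarrow> nat set" where "Out y = {j. j \<le> N \<and> (y, x j) \<in> A}"

lemma In_le: "i \<in> In y \<Longrightarrow> i \<le> N" by (simp add: In_def)
lemma Out_le: "i \<in> Out y \<Longrightarrow> i \<le> N" by (simp add: Out_def)
lemma fin_In: "finite (In y)" by (rule finite_subset[of _ "{..N}"]) (auto simp: In_def)
lemma fin_Out: "finite (Out y)" by (rule finite_subset[of _ "{..N}"]) (auto simp: Out_def)

lemma adjP: "c \<le> N \<Longrightarrow> adjacent A (x c) y \<Longrightarrow> c \<in> In y \<union> Out y"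
  by (auto simp: adjacent_def In_def Out_def)

lemma sp_in:
  assumes y: "y \<in> V" "y \<notin> set P" and i: "i \<in> In y" and c: "i < c" "c \<le> N"
  shows "c \<in> In y \<union> Out y"
proof -
  have "\<exists>q. is_path V A q \<and> set q \<subseteq> set P \<and> hd q = x c \<and> last q = x i \<and> length q = Suc (k - 1)"
    by (rule backpath) (use c k5 in auto)
  then obtain q where q: "is_path V A q" "set q \<subseteq> set P" "hd q = x c" "last q = x i" "length q = Suc (k - 1)"
    by blast
  have qne: "q \<noteq> []" using path_ne[OF q(1)] .
  have "is_path V A (q @ [y])" using q y i by (intro path_post) (auto simp: In_def)
  moreover have "length (q @ [y]) = Suc k" using q k5 by simp
  ultimately have "adjacent A (hd (q @ [y])) (last (q @ [y]))" by (rule kqt_adj)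
  then have "adjacent A (x c) y" using q qne by simp
  then show ?thesis using c by (intro adjP) auto
qed

lemma sp_out:
  assumes y: "y \<in> V" "y \<notin> set P" and j: "j \<in> Out y" and b: "b < j"
  shows "b \<in> In y \<union> Out y"
proof -
  have jN: "j \<le> N" using j Out_le by auto
  have "\<exists>q. is_path V A q \<and> set q \<subseteq> set P \<and> hd q = x j \<and> last q = x b \<and> length q = Suc (k - 1)"
    by (rule backpath) (use b jN k5 in auto)
  then obtain q where q: "is_path V A q" "set q \<subseteq> set P" "hd q = x j" "last q = x b" "length q = Suc (k - 1)"
    by blast
  have qne: "q \<noteq> []" using path_ne[OF q(1)] .
  have "is_path V A (y # q)" using q y j by (intro path_pre) (auto simp: Out_def)
  moreover have "length (y # q) = Suc k" using q k5 by simp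
  ultimately have "adjacent A (hd (y # q)) (last (y # q))" by (rule kqt_adj)
  then have "adjacent A (x b) y" using q qne adjacent_sym[of A y "x b"] by simp
  then show ?thesis using b jN by (intro adjP) auto
qed

lemma f1:
  assumes y: "y \<in> V" "y \<notin> set P" and i: "i \<in> In y" and c: "k - 1 \<le> i"
  shows "i - (k - 1) \<in> In y \<union> Out y"
proof -
  have iN: "i \<le> N" using i In_le by auto
  let ?q = "seg (i - (k - 1)) i"
  have qp: "is_path V A ?q" using seg_path iN by auto
  have "is_path V A (?q @ [y])" using y i iN qp notin_seg
    by (intro path_post) (auto simp: In_def)
  moreover have "length (?q @ [y]) = Suc k" using c k5 by simp
  ultimately have "adjacent A (hd (?q @ [y])) (last (?q @ [y]))" by (rule kqt_adj)
  then have "adjacent A (x (i - (k - 1))) y" by (simp add: seg_ne)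
  then show ?thesis using iN by (intro adjP) auto
qed

lemma f2:
  assumes y: "y \<in> V" "y \<notin> set P" and j: "j \<in> Out y" and c: "j \<le> 3"
  shows "j + (k - 1) \<in> In y \<union> Out y"
proof -
  let ?q = "seg j (j + (k - 1))"
  have jN: "j + (k - 1) \<le> N" using c k5 by simp
  have qp: "is_path V A ?q" using seg_path jN by auto
  have "is_path V A (y # ?q)" using y j qp notin_seg jN
    by (intro path_pre) (auto simp: Out_def)
  moreover have "length (y # ?q) = Suc k" using c k5 by simp
  ultimately have "adjacent A (hd (y # ?q)) (last (y # ?q))" by (rule kqt_adj)
  then have "adjacent A (x (j + (k - 1))) y" by (auto simp: seg_ne adjacent_def)
  then show ?thesis using jN by (intro adjP) auto
qed

lemma r5: assumes "y \<in> V" "y \<notin> set P" "i \<in> In y" "j \<in> Out y" shows "j \<le> i + 2"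
proof -
  have "i \<le> N" "(x i, y) \<in> A" using assms(3) by (auto simp: In_def)
  moreover have "j \<le> N" "(y, x j) \<in> A" using assms(4) by (auto simp: Out_def)
  ultimately show ?thesis using short_out[of y i j] assms(1,2) by blast
qed

lemma x1:
  assumes w: "w \<in> V" "w \<notin> set P" and z: "z \<in> V" "z \<notin> set P" and wz: "w \<noteq> z"
    and na: "\<not> adjacent A w z" and j: "j \<in> Out w" and i: "i \<in> In z"
  shows "j \<le> i"
proof (rule ccontr)
  assume "\<not> j \<le> i"
  then have ij: "i < j" by simp
  have jN: "j \<le> N" using j Out_le by auto
  have "\<exists>q. is_path V A q \<and> set q \<subseteq> set P \<and> hd q = x j \<and> last q = x i \<and> length q = Suc (k - 2)"
    by (rule backpath) (use ij jN k5 in auto)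
  then obtain q where q: "is_path V A q" "set q \<subseteq> set P" "hd q = x j" "last q = x i" "length q = Suc (k - 2)"
    by blast
  have qne: "q \<noteq> []" using path_ne[OF q(1)] .
  have zq: "z \<notin> set q" using q z by auto
  have wq: "w \<notin> set (q @ [z])" using q w wz by auto
  have iz: "(x i, z) \<in> A" using i by (simp add: In_def)
  have jw: "(w, x j) \<in> A" using j by (simp add: Out_def)
  have p1: "is_path V A (q @ [z])" using path_post[OF z(1) zq q(1)] q(4) iz by simp
  have hq: "hd (q @ [z]) = x j" using q(3) qne by simp
  have "is_path V A (w # (q @ [z]))" using path_pre[OF w(1) wq p1] hq jw by simp
  moreover have "length (w # (q @ [z])) = Suc k" using q k5 by simp
  ultimately have "adjacent A (hd (w # (q @ [z]))) (last (w # (q @ [z])))" by (rule kqt_adj)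
  then show False using na by simp
qed

lemma x2:
  assumes w: "w \<in> V" "w \<notin> set P" and z: "z \<in> V" "z \<notin> set P" and wz: "w \<noteq> z"
    and na: "\<not> adjacent A w z" and j: "j \<in> Out w" and i: "i \<in> In z"
  shows "i \<noteq> j + (k - 2)"
proof
  assume ij: "i = j + (k - 2)"
  have iN: "i \<le> N" using i In_le by auto
  let ?q = "seg j i"
  have q: "is_path V A ?q" using seg_path[of j i] ij iN by auto
  have hq: "hd ?q = x j" using ij by simp
  have zq: "z \<notin> set ?q" using notin_seg[of z i j] z iN by simp
  have wq: "w \<notin> set (?q @ [z])" using notin_seg[of w i j] w iN wz by simp
  have iz: "(x i, z) \<in> A" using i by (simp add: In_def)
  have jw: "(w, x j) \<in> A" using j by (simp add: Out_def)
  have p1: "is_path V A (?q @ [z])" using path_post[OF z(1) zq q] iz ij by simp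
  have hq2: "hd (?q @ [z]) = x j" using ij by (simp add: seg_ne)
  have "is_path V A (w # (?q @ [z]))" using path_pre[OF w(1) wq p1] hq2 jw by simp
  moreover have "length (w # (?q @ [z])) = Suc k" using ij k5 by simp
  ultimately have "adjacent A (hd (w # (?q @ [z]))) (last (w # (?q @ [z])))" by (rule kqt_adj)
  then show False using na by simp
qed

lemma P1:
  assumes w: "w \<in> V" "w \<notin> set P" and z: "z \<in> V" "z \<notin> set P" and wz: "w \<noteq> z"
    and na: "\<not> adjacent A w z" and ow: "Out w \<noteq> {}" and iz: "In z \<noteq> {}"
  shows False
proof -
  have na': "\<not> adjacent A z w" using na by (auto simp: adjacent_def)
  define a where "a = Max (Out w)"
  define m where "m = Min (In z)"
  have a: "a \<in> Out w" using ow fin_Out a_def Max_in by blast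
  have m: "m \<in> In z" using iz fin_In m_def Min_in by blast
  have RW1: "\<And>c. c \<in> Out w \<Longrightarrow> c \<le> a" using fin_Out a_def by auto
  have RZ1: "\<And>c. c \<in> In z \<Longrightarrow> m \<le> c" using fin_In m_def by auto
  have aN: "a \<le> N" using a Out_le by auto
  have mN: "m \<le> N" using m In_le by auto
  have SA: "\<And>c. c < a \<Longrightarrow> c \<in> In w \<or> c \<in> Out w" using sp_out[OF w a] by auto
  have SM: "\<And>c. m < c \<Longrightarrow> c \<le> N \<Longrightarrow> c \<in> In z \<or> c \<in> Out z" using sp_in[OF z m] by auto
  have X1a: "a \<le> m" using x1[OF w z wz na a m] .
  have X2a: "\<And>j i. j \<in> Out w \<Longrightarrow> i \<in> In z \<Longrightarrow> i \<noteq> j + (k - 2)" using x2[OF w z wz na] by auto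
  consider (A) "In w = {}" | (B) "Out z = {}" | (C) "In w \<noteq> {}" "Out z \<noteq> {}" by blast
  then show False
  proof cases
    case A
    have lo: "c < a \<Longrightarrow> c \<in> Out w" for c using SA[of c] A by auto
    have f2o: "t \<in> Out w \<Longrightarrow> t \<le> 3 \<Longrightarrow> t + (k - 1) \<in> Out w" for t
    proof -
      assume h: "t \<in> Out w" "t \<le> 3"
      have "t + (k - 1) \<in> In w \<union> Out w" by (rule f2[OF w h])
      then show ?thesis using A by simp
    qed
    have a4: "4 \<le> a"
    proof (rule ccontr)
      assume "\<not> 4 \<le> a"
      then have "a + (k - 1) \<in> Out w" using f2o[OF a] by simp
      then have "a + (k - 1) \<le> a" by (rule RW1)
      then show False using k5 by simp
    qed
    have "0 \<in> Out w" using lo[of 0] a4 by simp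
    then have "0 + (k - 1) \<in> Out w" using f2o[of 0] by simp
    then have "0 + (k - 1) \<le> a" by (rule RW1)
    then have "3 \<in> Out w" using lo[of 3] k5 by simp
    then have "3 + (k - 1) \<in> Out w" using f2o[of 3] by simp
    then have "3 + (k - 1) \<le> a" by (rule RW1)
    then have aN': "a = N" using aN k5 by simp
    then have mN': "m = N" using X1a mN by simp
    have "4 \<in> Out w" using lo[of 4] aN' k5 by simp
    moreover have "m = 4 + (k - 2)" using mN' k5 by simp
    ultimately show False using X2a[of 4 m] m by simp
  next
    case B
    have hi: "m < c \<Longrightarrow> c \<le> N \<Longrightarrow> c \<in> In z" for c using SM[of c] B by auto
    have f1i: "i \<in> In z \<Longrightarrow> k - 1 \<le> i \<Longrightarrow> i - (k - 1) \<in> In z" for i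
    proof -
      assume h: "i \<in> In z" "k - 1 \<le> i"
      have "i - (k - 1) \<in> In z \<union> Out z" by (rule f1[OF z h])
      then show ?thesis using B by simp
    qed
    have mk: "m \<le> k - 2"
    proof (rule ccontr)
      assume mk': "\<not> m \<le> k - 2"
      then have "m - (k - 1) \<in> In z" using f1i[OF m] by simp
      then have "m \<le> m - (k - 1)" by (rule RZ1)
      then show False using k5 mk' by simp
    qed
    have "N \<in> In z" using hi[of N] mk k5 by simp
    then have "N - (k - 1) \<in> In z" using f1i[of N] by simp
    then have "m \<le> N - (k - 1)" by (rule RZ1)
    then have m3: "m \<le> 3" using k5 by simp
    have "k - 1 \<in> In z" using hi[of "k - 1"] m3 k5 by simp
    then have "(k - 1) - (k - 1) \<in> In z" using f1i[of "k - 1"] by simp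
    then have "m \<le> (k - 1) - (k - 1)" by (rule RZ1)
    then have m0: "m = 0" by simp
    then have a0: "a = 0" using X1a by simp
    have "k - 2 \<in> In z" using hi[of "k - 2"] m0 k5 by simp
    then show False using X2a[of 0 "k - 2"] a a0 by simp
  next
    case C
    define mu where "mu = Min (In w)"
    define b where "b = Max (Out z)"
    have mu: "mu \<in> In w" using C fin_In mu_def Min_in by blast
    have b: "b \<in> Out z" using C fin_Out b_def Max_in by blast
    have RW2: "\<And>c. c \<in> In w \<Longrightarrow> mu \<le> c" using fin_In mu_def by auto
    have RZ2: "\<And>c. c \<in> Out z \<Longrightarrow> c \<le> b" using fin_Out b_def by auto
    have muN: "mu \<le> N" using mu In_le by auto
    have bN: "b \<le> N" using b Out_le by auto
    have SMU: "\<And>c. mu < c \<Longrightarrow> c \<le> N \<Longrightarrow> c \<in> In w \<or> c \<in> Out w" using sp_in[OF w mu] by auto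
    have SB: "\<And>c. c < b \<Longrightarrow> c \<in> In z \<or> c \<in> Out z" using sp_out[OF z b] by auto
    have X1b: "b \<le> mu" using x1[OF z w wz[symmetric] na' b mu] .
    have X2b: "\<And>j i. j \<in> Out z \<Longrightarrow> i \<in> In w \<Longrightarrow> i \<noteq> j + (k - 2)" using x2[OF z w wz[symmetric] na'] by auto
    have kk: "k - 5 + 7 = N" using k5 by simp
    have "pcore (k - 5) a m mu b (In w) (Out w) (In z) (Out z)"
    proof (unfold_locales, unfold kk)
      show "a \<in> Out w" "a \<le> N" "m \<in> In z" "m \<le> N" "mu \<in> In w" "mu \<le> N" "b \<in> Out z" "b \<le> N"
        by fact+
      show "\<And>c. c \<in> Out w \<Longrightarrow> c \<le> a" "\<And>c. c \<in> In w \<Longrightarrow> mu \<le> c"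
        "\<And>c. c \<in> In z \<Longrightarrow> m \<le> c" "\<And>c. c \<in> Out z \<Longrightarrow> c \<le> b"
        by (fact RW1 RW2 RZ1 RZ2)+
      show "\<And>c. c < a \<Longrightarrow> c \<in> In w \<or> c \<in> Out w" "\<And>c. mu < c \<Longrightarrow> c \<le> N \<Longrightarrow> c \<in> In w \<or> c \<in> Out w"
        "\<And>c. m < c \<Longrightarrow> c \<le> N \<Longrightarrow> c \<in> In z \<or> c \<in> Out z" "\<And>c. c < b \<Longrightarrow> c \<in> In z \<or> c \<in> Out z"
        by (fact SA SMU SM SB)+
      show "t \<in> In w \<or> t \<in> Out w" if h: "k - 5 + (4 + t) \<in> In w" for t
      proof -
        have e: "k - 5 + (4 + t) - (k - 1) = t" "k - 1 \<le> k - 5 + (4 + t)" using k5 by auto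
        show ?thesis using f1[OF w h e(2)] e(1) by simp
      qed
      show "t \<in> In z \<or> t \<in> Out z" if h: "k - 5 + (4 + t) \<in> In z" for t
      proof -
        have e: "k - 5 + (4 + t) - (k - 1) = t" "k - 1 \<le> k - 5 + (4 + t)" using k5 by auto
        show ?thesis using f1[OF z h e(2)] e(1) by simp
      qed
      show "k - 5 + (4 + t) \<in> In w \<or> k - 5 + (4 + t) \<in> Out w" if h: "t \<in> Out w" "t \<le> 3" for t
      proof -
        have e: "t + (k - 1) = k - 5 + (4 + t)" using k5 by auto
        have "t + (k - 1) \<in> In w \<union> Out w" by (rule f2[OF w h])
        then show ?thesis unfolding e by simp
      qed
      show "k - 5 + (4 + t) \<in> In z \<or> k - 5 + (4 + t) \<in> Out z" if h: "t \<in> Out z" "t \<le> 3" for t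
      proof -
        have e: "t + (k - 1) = k - 5 + (4 + t)" using k5 by auto
        have "t + (k - 1) \<in> In z \<union> Out z" by (rule f2[OF z h])
        then show ?thesis unfolding e by simp
      qed
      show "a \<le> mu + 2" using r5[OF w mu a] .
      show "b \<le> m + 2" using r5[OF z m b] .
      show "a \<le> m" "b \<le> mu" by fact+
      show False if h: "t \<in> Out w" "k - 5 + (3 + t) \<in> In z" for t
      proof -
        have e: "k - 5 + (3 + t) = t + (k - 2)" using k5 by auto
        show False using X2a[OF h] e by simp
      qed
      show False if h: "t \<in> Out z" "k - 5 + (3 + t) \<in> In w" for t
      proof -
        have e: "k - 5 + (3 + t) = t + (k - 2)" using k5 by auto
        show False using X2b[OF h] e by simp
      qed
    qed
    then show False by (rule pcore.contra)
  qed
qed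

lemma adj_ne: assumes "b \<in> set P" "adjacent A y b" shows "In y \<union> Out y \<noteq> {}"
proof -
  obtain c where c: "c \<le> N" "b = x c" using assms(1) setP by auto
  then show ?thesis using assms(2) by (auto simp: adjacent_def In_def Out_def)
qed

lemma nc_path:
  assumes y: "y \<in> V"
  shows "\<exists>p. is_path V A p \<and> hd p = x 0 \<and> last p = y \<and> (\<forall>a b. a + 2 \<le> b \<longrightarrow> b < length p \<longrightarrow> (p ! a, p ! b) \<notin> A)"
proof -
  have ex: "\<exists>n p. is_path V A p \<and> hd p = x 0 \<and> last p = y \<and> length p = n"
    using str x_in_V[of 0] y by (auto simp: strong_def is_path_from_to_def)
  define n0 where "n0 = (LEAST n. \<exists>p. is_path V A p \<and> hd p = x 0 \<and> last p = y \<and> length p = n)"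
  obtain p where p: "is_path V A p" "hd p = x 0" "last p = y" "length p = n0"
    using LeastI_ex[OF ex] unfolding n0_def by blast
  have mn: "n0 \<le> length q" if "is_path V A q" "hd q = x 0" "last q = y" for q
    unfolding n0_def using that by (intro Least_le) blast
  have nc: "(p ! a, p ! b) \<notin> A" if ab: "a + 2 \<le> b" "b < length p" for a b
  proof
    assume ar: "(p ! a, p ! b) \<in> A"
    let ?q = "take (Suc a) p @ drop b p"
    have p1: "is_path V A (take (Suc a) p)" using path_take[OF p(1)] ab by simp
    have p2: "is_path V A (drop b p)" using path_drop[OF p(1)] ab by simp
    have l1: "last (take (Suc a) p) = p ! a" using is_path_sub(3)[OF p(1), of 0 a] ab by simp
    have h2: "hd (drop b p) = p ! b" using ab by (simp add: hd_drop_conv_nth)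
    have dj: "set (take (Suc a) p) \<inter> set (drop b p) = {}"
      using set_take_disj_set_drop_if_distinct[OF path_distinct[OF p(1)]] ab by simp
    have "is_path V A ?q" using is_path_append[OF p1 p2 dj] l1 h2 ar by simp
    moreover have "hd ?q = x 0"
    proof -
      have "take (Suc a) p \<noteq> []" using path_ne[OF p(1)] by simp
      then have "hd ?q = hd (take (Suc a) p)" by simp
      also have "\<dots> = hd p" using path_ne[OF p(1)] by (simp add: hd_take)
      finally show ?thesis using p(2) by simp
    qed
    moreover have "last ?q = y" using p(3) ab by (simp add: last_drop)
    ultimately have "n0 \<le> length ?q" by (rule mn)
    then show False using p(4) ab by simp
  qed
  show ?thesis using p nc by blast
qed

lemma NF_aux:
  "\<And>p y. is_path V A p \<Longrightarrow> hd p = x 0 \<Longrightarrow> last p = y \<Longrightarrow> length p = Suc m \<Longrightarrow>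
     (\<forall>a b. a + 2 \<le> b \<longrightarrow> b < length p \<longrightarrow> (p ! a, p ! b) \<notin> A) \<Longrightarrow> y \<notin> set P \<Longrightarrow>
     In y \<union> Out y = {} \<Longrightarrow> False"
proof (induction m rule: less_induct)
  case (less m p y)
  note p = less.prems(1) and hp = less.prems(2) and lp = less.prems(3) and len = less.prems(4)
    and nc = less.prems(5) and yP = less.prems(6) and far = less.prems(7)
  have pne: "p \<noteq> []" using path_ne[OF p] .
  have dp: "distinct p" using path_distinct[OF p] .
  have p0: "p ! 0 = x 0" using hp pne by (simp add: hd_conv_nth)
  have pm: "p ! m = y" using lp len pne by (simp add: last_conv_nth)
  have pV: "p ! t \<in> V" if "t \<le> m" for t using path_V[OF p] len that by (simp add: subset_iff)
  have pinj: "p ! a = p ! b \<Longrightarrow> a \<le> m \<Longrightarrow> b \<le> m \<Longrightarrow> a = b" for a b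
    using dp len by (simp add: nth_eq_iff_index_eq)
  define tch where "tch t \<longleftrightarrow> p ! t \<in> set P \<or> (\<exists>i\<le>N. (x i, p ! t) \<in> A)" for t
  define R where "R = {t. t \<le> m \<and> tch t}"
  have finR: "finite R" unfolding R_def by simp
  have R0: "0 \<in> R" unfolding R_def tch_def using p0 x_in_P[of 0] by simp
  define r where "r = Max R"
  have rR: "r \<in> R" unfolding r_def using finR R0 Max_in by blast
  have rmax: "t \<in> R \<Longrightarrow> t \<le> r" for t unfolding r_def using finR by simp
  have ytch: "\<not> tch m" unfolding tch_def using pm yP far by (auto simp: In_def)
  have rm: "r < m" using rR ytch unfolding R_def by (cases "r = m") auto
  have after: "\<not> tch t" if "r < t" "t \<le> m" for t using rmax[of t] that unfolding R_def by auto
  have prP: "p ! r \<notin> set P"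
  proof
    assume "p ! r \<in> set P"
    then obtain c where c: "c \<le> N" "p ! r = x c" using setP by auto
    have "(p ! r, p ! Suc r) \<in> A" using path_arc[OF p, of r] rm len by simp
    then have "tch (Suc r)" unfolding tch_def using c by auto
    then show False using after[of "Suc r"] rm by simp
  qed
  obtain i0 where i0: "i0 \<le> N" "(x i0, p ! r) \<in> A" using rR prP unfolding R_def tch_def by auto
  have outside: "p ! t \<notin> set P" if "r \<le> t" "t \<le> m" for t
    using that prP after[of t] unfolding tch_def by (cases "t = r") auto
  have adj_after: "Out (p ! (r + s)) \<noteq> {}" if s: "1 \<le> s" "s \<le> k - 1" "r + s \<le> m" for s
  proof -
    have "\<exists>q. is_path V A q \<and> set q \<subseteq> set P \<and> last q = x i0 \<and> length q = Suc (k - 1 - s)"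
      by (rule cw_end) (use i0 k5 in auto)
    then obtain q where q: "is_path V A q" "set q \<subseteq> set P" "last q = x i0" "length q = Suc (k - 1 - s)" by blast
    let ?S = "drop r (take (Suc (r + s)) p)"
    have bl: "r + s < length p" using s len by simp
    have S: "is_path V A ?S" "hd ?S = p ! r" "last ?S = p ! (r + s)" "length ?S = Suc s"
      using is_path_sub[OF p _ bl, of r] by auto
    have Snth: "t < Suc s \<Longrightarrow> ?S ! t = p ! (r + t)" for t using is_path_sub(6)[OF p _ bl, of r t] by simp
    have SP: "set q \<inter> set ?S = {}"
    proof -
      have "set ?S \<inter> set P = {}"
      proof (rule ccontr)
        assume "set ?S \<inter> set P \<noteq> {}"
        then obtain v where v: "v \<in> set ?S" "v \<in> set P" by blast
        from v(1) obtain t where t0: "t < length ?S" "?S ! t = v" by (metis in_set_conv_nth)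
        have t: "t < length ?S" "?S ! t \<in> set P" using t0 v(2) by auto
        then show False using Snth[of t] S(4) outside[of "r + t"] s by simp
      qed
      then show ?thesis using q(2) by auto
    qed
    have qS: "is_path V A (q @ ?S)" using is_path_append[OF q(1) S(1) SP] q(3) S(2) i0 by simp
    have "length (q @ ?S) = Suc k" using q(4) S(4) s by simp
    then have "adjacent A (hd (q @ ?S)) (last (q @ ?S))" using kqt_adj qS by blast
    then have ad: "adjacent A (hd q) (p ! (r + s))" using path_ne[OF q(1)] S by simp
    have "hd q \<in> set P" using q(2) path_ne[OF q(1)] by auto
    then obtain c where c: "c \<le> N" "hd q = x c" using setP by auto
    have "(x c, p ! (r + s)) \<notin> A" using after[of "r + s"] s c unfolding tch_def by auto
    then have "(p ! (r + s), x c) \<in> A" using ad c by (auto simp: adjacent_def)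
    then show ?thesis using c by (auto simp: Out_def)
  qed
  have mrk: "r + k \<le> m"
  proof (rule ccontr)
    assume "\<not> r + k \<le> m"
    then have "Out (p ! (r + (m - r))) \<noteq> {}" using adj_after[of "m - r"] rm by simp
    then show False using far rm pm by simp
  qed
  define j where "j = m - k"
  have jr: "r \<le> j" using mrk by (simp add: j_def)
  have jm: "j + 2 \<le> m" using mrk k5 by (simp add: j_def)
  have pjP: "p ! j \<notin> set P" using outside[of j] jr jm by simp
  have yj: "(y, p ! j) \<in> A"
  proof -
    have bl: "m < length p" using len by simp
    have "is_path V A (drop j (take (Suc m) p))" "hd (drop j (take (Suc m) p)) = p ! j"
      "last (drop j (take (Suc m) p)) = p ! m" "length (drop j (take (Suc m) p)) = Suc m - j"
      using is_path_sub[OF p _ bl, of j] jm by auto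
    moreover have "Suc m - j = Suc k" using mrk by (simp add: j_def)
    ultimately have "adjacent A (p ! j) (p ! m)" using kqt_adj by metis
    moreover have "(p ! j, p ! m) \<notin> A" using nc jm len by simp
    ultimately show ?thesis using pm by (auto simp: adjacent_def)
  qed
  show False
  proof (cases "j = r")
    case True
    have o1: "Out (p ! (r + 1)) \<noteq> {}" using adj_after[of 1] k5 mrk by simp
    then obtain c where c: "c \<in> Out (p ! (r + 1))" by auto
    have cN: "c \<le> N" and car: "(p ! (r + 1), x c) \<in> A" using c by (auto simp: Out_def)
    have "\<exists>q. is_path V A q \<and> set q \<subseteq> set P \<and> hd q = x c \<and> length q = Suc (k - 3)"
      by (rule cw_start) (use cN k5 in auto)
    then obtain q where q: "is_path V A q" "set q \<subseteq> set P" "hd q = x c" "length q = Suc (k - 3)" by blast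
    let ?S = "drop r (take (Suc (r + 1)) p)"
    have bl: "r + 1 < length p" using rm len by simp
    have S: "is_path V A ?S" "hd ?S = p ! r" "last ?S = p ! (r + 1)" "length ?S = 2"
      using is_path_sub[OF p _ bl, of r] by auto
    have Snth: "t < 2 \<Longrightarrow> ?S ! t = p ! (r + t)" for t using is_path_sub(6)[OF p _ bl, of r t] by simp
    have setS: "set ?S = {p ! r, p ! (r + 1)}"
    proof -
      have "?S = [?S ! 0, ?S ! 1]" using S(4) by (cases ?S; cases "tl ?S") auto
      then show ?thesis using Snth[of 0] Snth[of 1] by (metis One_nat_def add.right_neutral empty_set list.simps(15) one_less_numeral_iff semiring_norm(76) zero_less_numeral)
    qed
    have yS: "y \<notin> set ?S" using setS pinj[of m r] pinj[of m "r + 1"] pm mrk k5 rm by auto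
    have yV: "y \<in> V" using pV[of m] pm by simp
    have p1: "is_path V A (y # ?S)" using path_pre[OF yV yS S(1)] S(2) yj True by simp
    have dj: "set (y # ?S) \<inter> set q = {}" using q(2) yP setS outside[of r] outside[of "r + 1"] rm by auto
    have p2: "is_path V A ((y # ?S) @ q)" using is_path_append[OF p1 q(1) dj] S car q(3) path_ne[OF S(1)] by simp
    have "length ((y # ?S) @ q) = Suc k" using S(4) q(4) k5 by simp
    then have "adjacent A (hd ((y # ?S) @ q)) (last ((y # ?S) @ q))" using kqt_adj p2 by blast
    then have "adjacent A y (last q)" using path_ne[OF q(1)] by simp
    moreover have "last q \<in> set P" using q(2) path_ne[OF q(1)] by auto
    ultimately show False using adj_ne far by blast
  next
    case False
    then have rj: "r < j" using jr by simp
    show False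
    proof (cases "Out (p ! j) = {}")
      case False
      then obtain c where c: "c \<in> Out (p ! j)" by auto
      have cN: "c \<le> N" and car: "(p ! j, x c) \<in> A" using c by (auto simp: Out_def)
      have "\<exists>q. is_path V A q \<and> set q \<subseteq> set P \<and> hd q = x c \<and> length q = Suc (k - 2)"
        by (rule cw_start) (use cN k5 in auto)
      then obtain q where q: "is_path V A q" "set q \<subseteq> set P" "hd q = x c" "length q = Suc (k - 2)" by blast
      have pjV: "p ! j \<in> V" using pV[of j] jm by simp
      have p1: "is_path V A (p ! j # q)" using path_pre[OF pjV _ q(1)] pjP q car by auto
      have yV: "y \<in> V" using pV[of m] pm by simp
      have yq: "y \<notin> set (p ! j # q)" using q(2) yP pinj[of j m] pm jm by auto
      have p2: "is_path V A (y # p ! j # q)" using path_pre[OF yV yq p1] yj by simp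
      have "length (y # p ! j # q) = Suc k" using q(4) k5 by simp
      then have "adjacent A (hd (y # p ! j # q)) (last (y # p ! j # q))" using kqt_adj p2 by blast
      then have "adjacent A y (last q)" using path_ne[OF q(1)] by simp
      moreover have "last q \<in> set P" using q(2) path_ne[OF q(1)] by auto
      ultimately show False using adj_ne far by blast
    next
      case True
      have notch: "\<not> tch j" using after[of j] rj jm by simp
      have farj: "In (p ! j) \<union> Out (p ! j) = {}" using True notch unfolding tch_def by (auto simp: In_def)
      have jlt: "j < m" using jm by simp
      let ?p' = "take (Suc j) p"
      have bl: "j < length p" using jm len by simp
      have p': "is_path V A ?p'" using path_take[OF p] bl by simp
      have h': "hd ?p' = x 0" using hp pne by (simp add: hd_take)
      have l': "last ?p' = p ! j" using is_path_sub(3)[OF p _ bl, of 0] by simp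
      have len': "length ?p' = Suc j" using bl by simp
      have nc': "\<forall>a b. a + 2 \<le> b \<longrightarrow> b < length ?p' \<longrightarrow> (?p' ! a, ?p' ! b) \<notin> A"
        using nc len' bl by auto
      show False using less.IH[OF jlt p' h' l' len' nc' pjP farj] .
    qed
  qed
qed

lemma NF: assumes "y \<in> V" "y \<notin> set P" shows "In y \<union> Out y \<noteq> {}"
proof
  assume far: "In y \<union> Out y = {}"
  obtain p where p: "is_path V A p" "hd p = x 0" "last p = y"
    "\<forall>a b. a + 2 \<le> b \<longrightarrow> b < length p \<longrightarrow> (p ! a, p ! b) \<notin> A"
    using nc_path[OF assms(1)] by blast
  have "length p = Suc (length p - 1)" using path_ne[OF p(1)] by simp
  then show False using NF_aux[OF p(1,2,3) _ p(4) assms(2) far] by blast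
qed

lemma allin:
  assumes y: "y \<in> V" "y \<notin> set P" and ne: "In y \<noteq> {}" and oe: "Out y = {}" and c: "c \<le> N"
  shows "c \<in> In y"
proof -
  define mu where "mu = Min (In y)"
  have mu: "mu \<in> In y" using ne fin_In mu_def Min_in by blast
  have hi: "mu \<le> c' \<Longrightarrow> c' \<le> N \<Longrightarrow> c' \<in> In y" for c'
    using sp_in[OF y mu, of c'] oe mu by (cases "c' = mu") auto
  have f1i: "i \<in> In y \<Longrightarrow> k - 1 \<le> i \<Longrightarrow> i - (k - 1) \<in> In y" for i
    using f1[OF y, of i] oe by auto
  have muN: "mu \<le> N" using mu In_le by auto
  have e3: "N - (k - 1) = 3" using k5 by simp
  have "N - (k - 1) \<in> In y" using f1i[OF hi[OF muN]] by simp
  then have "3 \<in> In y" using e3 by simp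
  then have mu3: "mu \<le> 3" using fin_In mu_def Min_le by blast
  show ?thesis
  proof (cases "3 \<le> c")
    case True then show ?thesis using hi mu3 c by simp
  next
    case False
    have "c + (k - 1) \<in> In y" using hi[of "c + (k - 1)"] mu3 False k5 by simp
    then show ?thesis using f1i[of "c + (k - 1)"] by simp
  qed
qed

definition hP :: "'a \<Rightarrow> nat" where
  "hP y = (LEAST l. \<exists>q. is_path V A q \<and> hd q = y \<and> last q \<in> set P \<and> length q = Suc l)"

lemma hP_ex: assumes "y \<in> V"
  shows "\<exists>q. is_path V A q \<and> hd q = y \<and> last q \<in> set P \<and> length q = Suc (hP y)"
proof -
  obtain q where q: "is_path V A q" "hd q = y" "last q = x 0"
    using str assms x_in_V[of 0] by (auto simp: strong_def is_path_from_to_def)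
  have "\<exists>l q. is_path V A q \<and> hd q = y \<and> last q \<in> set P \<and> length q = Suc l"
    using q x_in_P[of 0] path_ne[OF q(1)] by (intro exI[of _ "length q - 1"] exI[of _ q]) auto
  then show ?thesis unfolding hP_def by (rule LeastI_ex)
qed

lemma hP_le: "is_path V A q \<Longrightarrow> hd q = y \<Longrightarrow> last q \<in> set P \<Longrightarrow> hP y \<le> length q - 1"
  unfolding hP_def using path_ne[of V A q] by (intro Least_le) (rule exI[of _ q], auto)

lemma hP_step:
  assumes ar: "(y, y') \<in> A" and yP: "y \<notin> set P"
  shows "hP y \<le> Suc (hP y')"
proof -
  have yV: "y \<in> V" and y'V: "y' \<in> V" using arcV[OF ar] by auto
  obtain q where q: "is_path V A q" "hd q = y'" "last q \<in> set P" "length q = Suc (hP y')"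
    using hP_ex[OF y'V] by blast
  show ?thesis
  proof (cases "y \<in> set q")
    case False
    have yq: "is_path V A (y # q)" using path_pre[OF yV False q(1)] q(2) ar by simp
    have "last (y # q) \<in> set P" using q(3) path_ne[OF q(1)] by simp
    then have "hP y \<le> length (y # q) - 1" using hP_le[OF yq] by simp
    then show ?thesis using q(4) by simp
  next
    case True
    then obtain t where t: "t < length q" "q ! t = y" by (metis in_set_conv_nth)
    have "is_path V A (drop t q)" using path_drop[OF q(1) t(1)] .
    moreover have "hd (drop t q) = y" using t by (simp add: hd_drop_conv_nth)
    moreover have "last (drop t q) \<in> set P" using q(3) t by simp
    ultimately have "hP y \<le> length (drop t q) - 1" by (rule hP_le)
    then show ?thesis using q(4) by simp
  qed
qed

definition Tv :: "'a \<Rightarrow> bool" where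
  "Tv y \<longleftrightarrow> y \<in> V \<and> y \<notin> set P \<and> Out y = {} \<and> In y \<noteq> {}"

lemma T_key:
  assumes Tw: "Tv w" and Tz: "Tv z" and wz: "w \<noteq> z" and hwz: "hP z \<le> hP w"
    and IH: "\<And>w' z'. Tv w' \<Longrightarrow> Tv z' \<Longrightarrow> w' \<noteq> z' \<Longrightarrow> hP w' + hP z' < hP w + hP z \<Longrightarrow> adjacent A w' z'"
  shows "adjacent A w z"
proof (rule ccontr)
  assume na: "\<not> adjacent A w z"
  have wV: "w \<in> V" "w \<notin> set P" and zV: "z \<in> V" "z \<notin> set P" using Tw Tz by (auto simp: Tv_def)
  have allw: "c \<le> N \<Longrightarrow> (x c, w) \<in> A" for c using allin[of w c] Tw by (auto simp: Tv_def In_def)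
  define h where "h = hP z"
  obtain q where q: "is_path V A q" "hd q = z" "last q \<in> set P" "length q = Suc h"
    using hP_ex[OF zV(1)] h_def by blast
  have qne: "q \<noteq> []" using path_ne[OF q(1)] .
  have q0: "q ! 0 = z" using q(2) qne by (simp add: hd_conv_nth)
  have qh: "q ! h = last q" using q(4) qne by (simp add: last_conv_nth)
  have h1: "1 \<le> h" using q0 qh q(3) zV(2) by (cases h) auto
  have qdrop: "hP (q ! t) \<le> h - t" if "t \<le> h" for t
  proof -
    have "is_path V A (drop t q)" using path_drop[OF q(1)] that q(4) by simp
    moreover have "hd (drop t q) = q ! t" using that q(4) by (simp add: hd_drop_conv_nth)
    moreover have "last (drop t q) \<in> set P" using q(3) that q(4) by simp
    ultimately have "hP (q ! t) \<le> length (drop t q) - 1" by (rule hP_le)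
    then show ?thesis using q(4) by simp
  qed
  have qout: "q ! t \<notin> set P" if "t < h" for t
  proof
    assume qt: "q ! t \<in> set P"
    have "is_path V A (take (Suc t) q)" using path_take[OF q(1)] that q(4) by simp
    moreover have "hd (take (Suc t) q) = z" using q(2) qne by (simp add: hd_take)
    moreover have "last (take (Suc t) q) \<in> set P" using is_path_sub(3)[OF q(1), of 0 t] that q(4) qt by simp
    ultimately have "hP z \<le> length (take (Suc t) q) - 1" by (rule hP_le)
    then show False using that q(4) h_def by simp
  qed
  have qexit: "t + 1 \<ge> h" if "t < h" "(q ! t, x c) \<in> A" "c \<le> N" for t c
  proof -
    have p1: "is_path V A (take (Suc t) q)" using path_take[OF q(1)] that q(4) by simp
    have l1: "last (take (Suc t) q) = q ! t" using is_path_sub(3)[OF q(1), of 0 t] that q(4) by simp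
    have xn: "x c \<notin> set (take (Suc t) q)"
    proof
      assume "x c \<in> set (take (Suc t) q)"
      then obtain t' where t': "t' < length (take (Suc t) q)" "take (Suc t) q ! t' = x c" by (metis in_set_conv_nth)
      then show False using qout[of t'] x_in_P[OF that(3)] that(1) by auto
    qed
    have "is_path V A (take (Suc t) q @ [x c])" using path_post[OF x_in_V[OF that(3)] xn p1] l1 that(2) by simp
    moreover have "hd (take (Suc t) q @ [x c]) = z" using q(2) qne by (simp add: hd_take)
    moreover have "last (take (Suc t) q @ [x c]) \<in> set P" using x_in_P[OF that(3)] by simp
    ultimately have "hP z \<le> length (take (Suc t) q @ [x c]) - 1" by (rule hP_le)
    then show ?thesis using that q(4) h_def by simp
  qed
  have wq: "w \<noteq> q ! t" if "t < h" for t
  proof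
    assume wt: "w = q ! t"
    have "t \<noteq> 0"
    proof
      assume "t = 0" then show False using wt q0 wz by simp
    qed
    then have "hP w < h" using qdrop[of t] that wt by simp
    then show False using hwz h_def by simp
  qed
  obtain j where j: "j \<le> N" "q ! h = x j" using q(3) qh setP by auto
  show False
  proof (cases "h \<le> k - 1")
    case True
    let ?C = "take h q"
    have C: "is_path V A ?C" using path_take[OF q(1)] h1 q(4) by simp
    have Cl: "last ?C = q ! (h - 1)" using is_path_sub(3)[OF q(1), of 0 "h - 1"] h1 q(4) by simp
    have Ch: "hd ?C = z" using q(2) h1 qne by (simp add: hd_take)
    have Cset: "v \<in> set ?C \<Longrightarrow> \<exists>t<h. v = q ! t" for v using q(4) by (auto simp: in_set_conv_nth)
    have "\<exists>q2. is_path V A q2 \<and> set q2 \<subseteq> set P \<and> hd q2 = x j \<and> length q2 = Suc (k - 1 - h)"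
      by (rule cw_start) (use j k5 in auto)
    then obtain q2 where q2: "is_path V A q2" "set q2 \<subseteq> set P" "hd q2 = x j" "length q2 = Suc (k - 1 - h)" by blast
    have dj: "set ?C \<inter> set q2 = {}" using Cset qout q2(2) by blast
    have ar: "(last ?C, hd q2) \<in> A" using Cl q2(3) j path_arc[OF q(1), of "h - 1"] h1 q(4) by simp
    have p1: "is_path V A (?C @ q2)" using is_path_append[OF C q2(1) dj ar] .
    have wn: "w \<notin> set (?C @ q2)" using Cset wq q2(2) wV(2) by auto
    have lq2: "last q2 \<in> set P" using q2(2) path_ne[OF q2(1)] by auto
    then obtain c where c: "c \<le> N" "last q2 = x c" using setP by auto
    have p2: "is_path V A ((?C @ q2) @ [w])" using path_post[OF wV(1) wn p1] c allw path_ne[OF q2(1)] by simp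
    have "length ((?C @ q2) @ [w]) = Suc k" using q2(4) True h1 q(4) by simp
    then have "adjacent A (hd ((?C @ q2) @ [w])) (last ((?C @ q2) @ [w]))" using kqt_adj p2 by blast
    moreover have "hd ((?C @ q2) @ [w]) = z" using Ch path_ne[OF C] by simp
    ultimately have "adjacent A z w" by simp
    then show False using na by (auto simp: adjacent_def)
  next
    case False
    then have hk: "k \<le> h" by simp
    define z' where "z' = q ! (k - 1)"
    have z'P: "z' \<notin> set P" using qout[of "k - 1"] hk k5 z'_def by simp
    have z'V: "z' \<in> V" using path_V[OF q(1)] q(4) hk z'_def by (simp add: subset_iff)
    have km: "k - 1 < h" using hk k5 by simp
    have z'w: "z' \<noteq> w" using wq[OF km] z'_def by auto
    let ?C = "take k q"
    have C: "is_path V A ?C" using path_take[OF q(1)] hk q(4) k5 by simp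
    have Cl: "last ?C = z'" using is_path_sub(3)[OF q(1), of 0 "k - 1"] hk q(4) k5 z'_def by simp
    have Ch: "hd ?C = z" using q(2) qne k5 by (simp add: hd_take)
    have Clen: "length ?C = k" using hk q(4) by simp
    have Cset: "v \<in> set ?C \<Longrightarrow> \<exists>t<k. v = q ! t" for v using q(4) hk by (auto simp: in_set_conv_nth)
    have hz': "hP z' \<le> h - (k - 1)" using qdrop[of "k - 1"] hk z'_def by simp
    have adj': "adjacent A z' w"
    proof (cases "h = k")
      case True
      have arj: "(z', x j) \<in> A" using path_arc[OF q(1), of "k - 1"] j True q(4) k5 z'_def by simp
      have "\<exists>q2. is_path V A q2 \<and> set q2 \<subseteq> set P \<and> hd q2 = x j \<and> length q2 = Suc (k - 2)"
        by (rule cw_start) (use j k5 in auto)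
      then obtain q2 where q2: "is_path V A q2" "set q2 \<subseteq> set P" "hd q2 = x j" "length q2 = Suc (k - 2)" by blast
      have p1: "is_path V A (z' # q2)" using path_pre[OF z'V _ q2(1)] z'P q2(2,3) arj by auto
      have lq2: "last q2 \<in> set P" using q2(2) path_ne[OF q2(1)] by auto
      then obtain c where c: "c \<le> N" "last q2 = x c" using setP by auto
      have wn: "w \<notin> set (z' # q2)" using z'w q2(2) wV(2) by auto
      have p2: "is_path V A ((z' # q2) @ [w])" using path_post[OF wV(1) wn p1] c allw path_ne[OF q2(1)] by simp
      have "length ((z' # q2) @ [w]) = Suc k" using q2(4) k5 by simp
      then have "adjacent A (hd ((z' # q2) @ [w])) (last ((z' # q2) @ [w]))" using kqt_adj p2 by blast
      then show ?thesis by simp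
    next
      case False
      then have hk1: "k < h" using hk by simp
      have oz': "Out z' = {}"
      proof (rule ccontr)
        assume "Out z' \<noteq> {}"
        then obtain c where "c \<in> Out z'" by auto
        then have "c \<le> N" "(q ! (k - 1), x c) \<in> A" using z'_def by (auto simp: Out_def)
        then have "k - 1 + 1 \<ge> h" using qexit[of "k - 1" c] hk k5 by simp
        then show False using hk1 k5 by simp
      qed
      obtain i where i: "i \<in> In z" using Tz by (auto simp: Tv_def)
      have iN: "i \<le> N" and iz: "(x i, z) \<in> A" using i by (auto simp: In_def)
      have xiC: "x i \<notin> set ?C" using Cset qout x_in_P[OF iN] hk by fastforce
      have pc: "is_path V A (x i # ?C)" using path_pre[OF x_in_V[OF iN] xiC C] Ch iz by simp
      have "length (x i # ?C) = Suc k" using Clen by simp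
      then have "adjacent A (hd (x i # ?C)) (last (x i # ?C))" using kqt_adj pc by blast
      then have "adjacent A (x i) z'" using Cl path_ne[OF C] by simp
      then have "(x i, z') \<in> A" using oz' iN by (auto simp: adjacent_def Out_def)
      then have "i \<in> In z'" using iN by (simp add: In_def)
      then have Tz': "Tv z'" using z'V z'P oz' by (auto simp: Tv_def)
      have "hP w + hP z' < hP w + hP z" using hz' h_def hk k5 by simp
      then show ?thesis using IH[OF Tw Tz' z'w[symmetric]] by (simp add: adjacent_sym)
    qed
    show False
    proof (cases "(z', w) \<in> A")
      case True
      have wn: "w \<notin> set ?C"
      proof
        assume "w \<in> set ?C"
        then obtain t where "t < k" "w = q ! t" using Cset by blast
        then show False using wq[of t] hk by simp
      qed
      have p2: "is_path V A (?C @ [w])" using path_post[OF wV(1) wn C] Cl True by simp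
      have "length (?C @ [w]) = Suc k" using Clen by simp
      then have "adjacent A (hd (?C @ [w])) (last (?C @ [w]))" using kqt_adj p2 by blast
      then have "adjacent A z w" using Ch path_ne[OF C] by simp
      then show False using na by (auto simp: adjacent_def)
    next
      case False
      then have "(w, z') \<in> A" using adj' by (auto simp: adjacent_def)
      then have "hP w \<le> Suc (hP z')" using hP_step wV(2) by blast
      then show False using hz' hwz h_def hk k5 by simp
    qed
  qed
qed

lemma T_adj: "Tv w \<Longrightarrow> Tv z \<Longrightarrow> w \<noteq> z \<Longrightarrow> adjacent A w z"
proof (induction "hP w + hP z" arbitrary: w z rule: less_induct)
  case less
  show ?case
  proof (cases "hP z \<le> hP w")
    case True
    show ?thesis by (rule T_key[OF less.prems True]) (use less.hyps in blast)
  next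
    case False
    have "adjacent A z w"
      by (rule T_key[OF less.prems(2,1) less.prems(3)[symmetric]]) (use False less.hyps in \<open>auto simp: add.commute\<close>)
    then show ?thesis by (simp add: adjacent_sym)
  qed
qed

end

lemma path_rev:
  assumes "is_path V A p" shows "is_path V (converse A) (rev p)"
proof -
  have a: "(rev p ! i, rev p ! Suc i) \<in> converse A" if "Suc i < length (rev p)" for i
  proof -
    let ?j = "length p - Suc (Suc i)"
    have j: "Suc ?j < length p" "Suc ?j = length p - Suc i" using that by auto
    have "(p ! ?j, p ! Suc ?j) \<in> A" using assms j(1) by (simp add: is_path_def)
    then show ?thesis using that j by (simp add: rev_nth)
  qed
  show ?thesis using assms a by (auto simp: is_path_def)
qed

lemma adjacent_conv: "adjacent (converse A) a b = adjacent A a b"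
  by (auto simp: adjacent_def)

lemma setting_conv:
  assumes "setting V A k P"
  shows "setting V (converse A) k (rev P)"
proof -
  interpret S: setting V A k P by fact
  show ?thesis
  proof
    show "digraph V (converse A)" using S.dg by (auto simp: digraph_def)
    show "k_quasi_transitive k V (converse A)"
      unfolding k_quasi_transitive_def
    proof (intro allI impI)
      fix p assume h: "is_path V (converse A) p \<and> path_len p = k"
      then have "is_path V (converse (converse A)) (rev p)" using path_rev by blast
      then have "is_path V A (rev p)" by simp
      moreover have "path_len (rev p) = k" using h by (simp add: path_len_def)
      ultimately have "adjacent A (hd (rev p)) (last (rev p))" using S.kqt by (auto simp: k_quasi_transitive_def)
      then show "adjacent (converse A) (hd p) (last p)" using h path_ne[of V "converse A" p]
        by (auto simp: adjacent_def hd_rev last_rev)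
    qed
    show "strong V (converse A)"
      unfolding strong_def
    proof (intro ballI)
      fix a b assume "a \<in> V" "b \<in> V"
      then obtain p where "is_path_from_to V A p b a" using S.str by (auto simp: strong_def)
      then show "\<exists>p. is_path_from_to V (converse A) p a b"
        using path_rev[of V A p] path_ne[of V A p] by (intro exI[of _ "rev p"]) (auto simp: is_path_from_to_def hd_rev last_rev)
    qed
    show "5 \<le> k" by (rule S.k5)
    show "is_path V (converse A) (rev P)" using path_rev[OF S.Ppath] .
    show "length (rev P) = k + 3" using S.Plen by simp
    show "k + 3 \<le> length q" if "is_path V (converse A) q" "hd q = hd (rev P)" "last q = last (rev P)" for q
    proof -
      have "is_path V A (rev q)" using path_rev[OF that(1)] by simp
      moreover have "hd (rev q) = hd P" using that path_ne[OF that(1)] S.Pne by (simp add: hd_rev last_rev)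
      moreover have "last (rev q) = last P" using that path_ne[OF that(1)] S.Pne by (simp add: hd_rev last_rev)
      ultimately show ?thesis using S.Pmin by fastforce
    qed
    show "adjacent (converse A) a b" if "a \<in> set (rev P)" "b \<in> set (rev P)" "a \<noteq> b" for a b
      using S.semi[of a b] that by (simp add: adjacent_conv)
  qed
qed

context setting
begin
lemma In_iff: "i \<in> In y \<longleftrightarrow> i \<le> N \<and> (x i, y) \<in> A" by (simp add: In_def)
lemma Out_iff: "i \<in> Out y \<longleftrightarrow> i \<le> N \<and> (y, x i) \<in> A" by (simp add: Out_def)
lemma x_eq: "x i = P ! i" by (simp add: x_def)
lemma Tv_iff: "Tv y \<longleftrightarrow> y \<in> V \<and> y \<notin> set P \<and> Out y = {} \<and> In y \<noteq> {}" by (simp add: Tv_def)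
end

lemma conv_facts:
  assumes "setting V A k P"
  shows "(setting.Out (converse A) k (rev P) y = {}) = (setting.In A k P y = {})"
    and "(setting.In (converse A) k (rev P) y = {}) = (setting.Out A k P y = {})"
proof -
  interpret S: setting V A k P by fact
  interpret C: setting V "converse A" k "rev P" using setting_conv[OF assms] .
  have cx: "C.x i = S.x (k + 2 - i)" if "i \<le> k + 2" for i
    using that S.Plen by (simp add: C.x_eq S.x_eq rev_nth)
  have e1: "C.Out y = (\<lambda>i. k + 2 - i) ` S.In y"
  proof (rule set_eqI)
    fix j
    show "j \<in> C.Out y \<longleftrightarrow> j \<in> (\<lambda>i. k + 2 - i) ` S.In y"
    proof
      assume "j \<in> C.Out y"
      then have j: "j \<le> k + 2" "(S.x (k + 2 - j), y) \<in> A" using cx by (auto simp: C.Out_iff)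
      then have "k + 2 - j \<in> S.In y" by (simp add: S.In_iff)
      moreover have "j = k + 2 - (k + 2 - j)" using j by simp
      ultimately show "j \<in> (\<lambda>i. k + 2 - i) ` S.In y" by blast
    next
      assume "j \<in> (\<lambda>i. k + 2 - i) ` S.In y"
      then obtain i where i: "i \<le> k + 2" "(S.x i, y) \<in> A" "j = k + 2 - i" by (auto simp: S.In_iff)
      then have "C.x j = S.x i" using cx[of j] by simp
      then show "j \<in> C.Out y" using i by (simp add: C.Out_iff)
    qed
  qed
  have e2: "C.In y = (\<lambda>i. k + 2 - i) ` S.Out y"
  proof (rule set_eqI)
    fix j
    show "j \<in> C.In y \<longleftrightarrow> j \<in> (\<lambda>i. k + 2 - i) ` S.Out y"
    proof
      assume "j \<in> C.In y"
      then have j: "j \<le> k + 2" "(y, S.x (k + 2 - j)) \<in> A" using cx by (auto simp: C.In_iff)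
      then have "k + 2 - j \<in> S.Out y" by (simp add: S.Out_iff)
      moreover have "j = k + 2 - (k + 2 - j)" using j by simp
      ultimately show "j \<in> (\<lambda>i. k + 2 - i) ` S.Out y" by blast
    next
      assume "j \<in> (\<lambda>i. k + 2 - i) ` S.Out y"
      then obtain i where i: "i \<le> k + 2" "(y, S.x i) \<in> A" "j = k + 2 - i" by (auto simp: S.Out_iff)
      then have "C.x j = S.x i" using cx[of j] by simp
      then show "j \<in> C.In y" using i by (simp add: C.In_iff)
    qed
  qed
  show "(C.Out y = {}) = (S.In y = {})" using e1 by simp
  show "(C.In y = {}) = (S.Out y = {})" using e2 by simp
qed

theorem lemma2p13:
  fixes V :: "'a set" and A :: "('a \<times> 'a) set" and k :: nat
    and u v :: 'a and P :: "'a list"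
  assumes "odd k" and "k \<ge> 5"
    and "digraph V A" and "strong V A" and "k_quasi_transitive k V A"
    and "diam V A \<ge> k + 2"
    and "u \<in> V" and "v \<in> V" and "dist V A u v = k + 2"
    and "is_path_from_to V A P u v" and "path_len P = dist V A u v"
    and "semicomplete (set P) (induced_arcs A (set P))"
  shows "semicomplete (V - set P) (induced_arcs A (V - set P))"
proof -
  have pp: "is_path V A P" "hd P = u" "last P = v" using assms(10) by (auto simp: is_path_from_to_def)
  have Plen: "length P = k + 3" using assms(9,11) path_ne[OF pp(1)] by (simp add: path_len_def)
  have Pmin: "k + 3 \<le> length q" if "is_path V A q" "hd q = hd P" "last q = last P" for q
  proof -
    have "is_path_from_to V A q u v" using that pp by (simp add: is_path_from_to_def)
    then have "\<exists>p. is_path_from_to V A p u v \<and> path_len p = path_len q" by blast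
    then have "dist V A u v \<le> path_len q" unfolding dist_def by (rule Least_le)
    then show ?thesis using assms(9) path_ne[OF that(1)] by (simp add: path_len_def)
  qed
  have semi: "adjacent A a b" if "a \<in> set P" "b \<in> set P" "a \<noteq> b" for a b
    using assms(12) that by (auto simp: semicomplete_def adjacent_def induced_arcs_def)
  have S: "setting V A k P"
    by (unfold_locales) (use assms(2-5) pp(1) Plen Pmin semi in auto)
  interpret S: setting V A k P by (rule S)
  interpret C: setting V "converse A" k "rev P" by (rule setting_conv[OF S])
  show ?thesis unfolding semicomplete_def
  proof (intro ballI impI)
    fix w z assume w: "w \<in> V - set P" and z: "z \<in> V - set P" and wz: "w \<noteq> z"
    have wV: "w \<in> V" "w \<notin> set P" and zV: "z \<in> V" "z \<notin> set P" using w z by auto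
    have "adjacent A w z"
    proof (rule ccontr)
      assume na: "\<not> adjacent A w z"
      have na': "\<not> adjacent A z w" using na by (auto simp: adjacent_def)
      have nw: "S.In w \<union> S.Out w \<noteq> {}" using S.NF[OF wV] .
      have nz: "S.In z \<union> S.Out z \<noteq> {}" using S.NF[OF zV] .
      consider (c1) "S.Out w \<noteq> {}" "S.In z \<noteq> {}" | (c2) "S.Out z \<noteq> {}" "S.In w \<noteq> {}"
        | (c3) "S.Out w = {}" "S.Out z = {}" | (c4) "S.In w = {}" "S.In z = {}"
        using nw nz by blast
      then show False
      proof cases
        case c1 then show False using S.P1[OF wV zV wz na] by blast
      next
        case c2 then show False using S.P1[OF zV wV wz[symmetric] na'] by blast
      next
        case c3
        have "S.Tv w" "S.Tv z" using c3 nw nz wV zV by (auto simp: S.Tv_iff)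
        then show False using S.T_adj wz na by blast
      next
        case c4
        have "C.Tv w" "C.Tv z" using c4 nw nz wV zV conv_facts[OF S] by (auto simp: C.Tv_iff)
        then have "adjacent (converse A) w z" using C.T_adj wz by blast
        then show False using na by (simp add: adjacent_conv)
      qed
    qed
    then show "adjacent (induced_arcs A (V - set P)) w z" using w z by (auto simp: adjacent_def induced_arcs_def)
  qed
qed

end
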